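(* Let $n\ge2$ and suppose $G_{\text{hon}}$ is connected. For every integer $j\ge3$ and every real $\iota>1$, $$\mathbb P\big(\bar\tau_{\text{spr}}>\iota\, j\log(j)/\Upsilon\big)\le\mathbb P(\underline\tau_{\text{spr}}>j)+27\,n\,j^{1-\iota}.$$
   Context: $G=([n+m],E)$ undirected, honest agents $[n]$; for $i\in[n]$, $N_{\text{hon}}(i)$ its honest neighbors, $d_{\text{hon}}(i)=|N_{\text{hon}}(i)|$, $d(i)$ its total degree; $G_{\text{hon}}$ is the subgraph induced on $[n]$; $\Upsilon=\min_{i\in[n]}d_{\text{hon}}(i)/d(i)$; $i^\star\in[n]$ is fixed. Noisy rumor process: for each $i\in[n]$, $\{\bar Y_j^{(i)}\}_{j\ge1}$ i.i.d. Bernoulli$(\Upsilon)$ and $\{\bar H_j^{(i)}\}_{j\ge1}$ i.i.d. uniform on $N_{\text{hon}}(i)$, all independent; $\bar{\mathcal I}_0=\{i^\star\}$, $\bar{\mathcal I}_j=\bar{\mathcal I}_{j-1}\cup\{i\in[n]\setminus\bar{\mathcal I}_{j-1}:\bar Y_j^{(i)}=1,\bar H_j^{(i)}\in\bar{\mathcal I}_{j-1}\}$; $\bar\tau_{\text{spr}}=\inf\{j\in\mathbb N:\bar{\mathcal I}_j=[n]\}$. Noiseless process: $\{\underline H_j^{(i)}\}$ i.i.d. uniform on $N_{\text{hon}}(i)$; $\underline{\mathcal I}_0=\{i^\star\}$, $\underline{\mathcal I}_j=\underline{\mathcal I}_{j-1}\cup\{i\notin\underline{\mathcal I}_{j-1}:\underline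 H_j^{(i)}\in\underline{\mathcal I}_{j-1}\}$; $\underline\tau_{\text{spr}}=\inf\{j:\underline{\mathcal I}_j=[n]\}$. (The inequality concerns the marginal distributions of $\bar\tau_{\text{spr}}$ and $\underline\tau_{\text{spr}}$.) *)

theory Defs
  imports "HOL-Probability.Probability"
begin

(* Vertices of G are {1..n+m}; honest agents are [n] = {1..n}.
   The undirected graph is a symmetric irreflexive edge relation E. *)

definition Nhon :: "(nat \<times> nat) set \<Rightarrow> nat \<Rightarrow> nat \<Rightarrow> nat set" where
  "Nhon E n i = {k \<in> {1..n}. (i, k) \<in> E}"

definition deg :: "(nat \<times> nat) set \<Rightarrow> nat \<Rightarrow> nat \<Rightarrow> nat \<Rightarrow> nat" where
  "deg E n m i = card {k \<in> {1..n+m}. (i, k) \<in> E}"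

definition Upsilon :: "(nat \<times> nat) set \<Rightarrow> nat \<Rightarrow> nat \<Rightarrow> real" where
  "Upsilon E n m = Min ((\<lambda>i. real (card (Nhon E n i)) / real (deg E n m i)) ` {1..n})"

definition simple_graph :: "(nat \<times> nat) set \<Rightarrow> nat \<Rightarrow> bool" where
  "simple_graph E N \<longleftrightarrow> E \<subseteq> {1..N} \<times> {1..N} \<and> sym E \<and> (\<forall>x. (x, x) \<notin> E)"

definition hon_connected :: "(nat \<times> nat) set \<Rightarrow> nat \<Rightarrow> bool" where
  "hon_connected E n \<longleftrightarrow>
     (\<forall>a\<in>{1..n}. \<forall>b\<in>{1..n}. (a, b) \<in> (E \<inter> ({1..n} \<times> {1..n}))\<^sup>*)"

fun noisy_inf :: "nat \<Rightarrow> nat \<Rightarrow> (nat \<Rightarrow> nat \<Rightarrow> bool) \<Rightarrow> (nat \<Rightarrow> nat \<Rightarrow> nat) \<Rightarrow> nat \<Rightarrow> nat set" where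
  "noisy_inf n istar Y H 0 = {istar}"
| "noisy_inf n istar Y H (Suc j) =
     noisy_inf n istar Y H j \<union>
     {i \<in> {1..n} - noisy_inf n istar Y H j. Y (Suc j) i \<and> H (Suc j) i \<in> noisy_inf n istar Y H j}"

fun noiseless_inf :: "nat \<Rightarrow> nat \<Rightarrow> (nat \<Rightarrow> nat \<Rightarrow> nat) \<Rightarrow> nat \<Rightarrow> nat set" where
  "noiseless_inf n istar H 0 = {istar}"
| "noiseless_inf n istar H (Suc j) =
     noiseless_inf n istar H j \<union>
     {i \<in> {1..n} - noiseless_inf n istar H j. H (Suc j) i \<in> noiseless_inf n istar H j}"

definition spread_time :: "nat \<Rightarrow> (nat \<Rightarrow> nat set) \<Rightarrow> enat" where
  "spread_time n I = (if \<exists>j. I j = {1..n} then enat (LEAST j. I j = {1..n}) else \<infinity>)"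

end

theory Submission
  imports Defs
begin


lemma noisy_sub: "istar \<in> {1..n} \<Longrightarrow> noisy_inf n istar Y H k \<subseteq> {1..n}"
  by (induction k) auto

lemma noiseless_sub: "istar \<in> {1..n} \<Longrightarrow> noiseless_inf n istar H k \<subseteq> {1..n}"
  by (induction k) auto

lemma noisy_mono: "a \<le> b \<Longrightarrow> noisy_inf n istar Y H a \<subseteq> noisy_inf n istar Y H b"
proof (induction b)
  case 0 then show ?case by simp
next
  case (Suc b) then show ?case by (cases "a = Suc b") auto
qed

lemma noiseless_mono: "a \<le> b \<Longrightarrow> noiseless_inf n istar H a \<subseteq> noiseless_inf n istar H b"
proof (induction b)
  case 0 then show ?case by simp
next
  case (Suc b) then show ?case by (cases "a = Suc b") auto
qed

lemma noiseless_cong: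
  "(\<And>k i. k \<in> {1..j} \<Longrightarrow> i \<in> {1..n} \<Longrightarrow> H k i = H' k i) \<Longrightarrow> k \<le> j \<Longrightarrow>
   noiseless_inf n istar H k = noiseless_inf n istar H' k"
proof (induction k)
  case 0 then show ?case by simp
next
  case (Suc k)
  then have "noiseless_inf n istar H k = noiseless_inf n istar H' k" by simp
  moreover have "\<And>i. i \<in> {1..n} \<Longrightarrow> H (Suc k) i = H' (Suc k) i" using Suc.prems by auto
  ultimately show ?case by auto
qed

lemma noiseless_time:
  assumes "istar \<in> {1..n}"
  shows "(spread_time n (noiseless_inf n istar H) > enat j) \<longleftrightarrow> noiseless_inf n istar H j \<noteq> {1..n}"
proof
  assume a: "spread_time n (noiseless_inf n istar H) > enat j"
  show "noiseless_inf n istar H j \<noteq> {1..n}"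
  proof
    assume b: "noiseless_inf n istar H j = {1..n}"
    then have le: "(LEAST k. noiseless_inf n istar H k = {1..n}) \<le> j" by (rule Least_le)
    have e: "\<exists>k. noiseless_inf n istar H k = {1..n}" using b by blast
    have "spread_time n (noiseless_inf n istar H) = enat (LEAST k. noiseless_inf n istar H k = {1..n})"
      unfolding spread_time_def using e by (rule if_P)
    with a le show False by simp
  qed
next
  assume a: "noiseless_inf n istar H j \<noteq> {1..n}"
  show "spread_time n (noiseless_inf n istar H) > enat j"
  proof (cases "\<exists>k. noiseless_inf n istar H k = {1..n}")
    case True
    let ?s = "LEAST k. noiseless_inf n istar H k = {1..n}"
    have s: "noiseless_inf n istar H ?s = {1..n}" using True by (rule LeastI_ex)
    have "j < ?s"
    proof (rule ccontr)
      assume "\<not> j < ?s"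
      then have "noiseless_inf n istar H ?s \<subseteq> noiseless_inf n istar H j" by (intro noiseless_mono) auto
      with s noiseless_sub[OF assms, of H j] a show False by auto
    qed
    then show ?thesis using True unfolding spread_time_def by simp
  next
    case False then show ?thesis unfolding spread_time_def by simp
  qed
qed

definition blk :: "nat \<Rightarrow> nat \<Rightarrow> nat set" where "blk L k = {(k-1)*L+1 .. k*L}"

definition sel :: "nat \<Rightarrow> nat \<Rightarrow> (nat \<Rightarrow> bool) \<Rightarrow> nat" where
  "sel L k y = (if \<exists>t\<in>blk L k. y t then LEAST t. t \<in> blk L k \<and> y t else k*L)"

lemma sel_good: "\<exists>t\<in>blk L k. y t \<Longrightarrow> sel L k y \<in> blk L k \<and> y (sel L k y)"
  unfolding sel_def using LeastI_ex[of "\<lambda>t. t \<in> blk L k \<and> y t"] by auto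

lemma coupling:
  assumes "istar \<in> {1..n}"
    and good: "\<And>k i. k \<in> {1..j} \<Longrightarrow> i \<in> {1..n} \<Longrightarrow> \<exists>t\<in>blk L k. Y t i"
    and "k \<le> j"
  shows "noiseless_inf n istar (\<lambda>k i. H (sel L k (\<lambda>t. Y t i)) i) k \<subseteq> noisy_inf n istar Y H (k*L)"
  using \<open>k \<le> j\<close>
proof (induction k)
  case 0 then show ?case by simp
next
  case (Suc k)
  let ?HH = "\<lambda>k i. H (sel L k (\<lambda>t. Y t i)) i"
  have IH: "noiseless_inf n istar ?HH k \<subseteq> noisy_inf n istar Y H (k*L)" using Suc by simp
  have mono1: "noisy_inf n istar Y H (k*L) \<subseteq> noisy_inf n istar Y H (Suc k*L)"
    by (rule noisy_mono) simp
  show ?case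
  proof
    fix x assume x: "x \<in> noiseless_inf n istar ?HH (Suc k)"
    show "x \<in> noisy_inf n istar Y H (Suc k * L)"
    proof (cases "x \<in> noiseless_inf n istar ?HH k")
      case True then show ?thesis using IH mono1 by blast
    next
      case False
      with x have xn: "x \<in> {1..n}" and hx: "?HH (Suc k) x \<in> noiseless_inf n istar ?HH k" by auto
      let ?t = "sel L (Suc k) (\<lambda>t. Y t x)"
      have "?t \<in> blk L (Suc k) \<and> Y ?t x" using good[of "Suc k" x] xn Suc.prems by (intro sel_good) auto
      then have t1: "k*L + 1 \<le> ?t" "?t \<le> Suc k * L" and yt: "Y ?t x" by (auto simp: blk_def)
      then obtain t0 where t0: "?t = Suc t0" "k*L \<le> t0" by (cases ?t) auto
      have "H ?t x \<in> noisy_inf n istar Y H (k*L)" using hx IH by auto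
      also have "\<dots> \<subseteq> noisy_inf n istar Y H t0" using t0 by (intro noisy_mono)
      finally have "H (Suc t0) x \<in> noisy_inf n istar Y H t0" using t0 by simp
      then have "x \<in> noisy_inf n istar Y H (Suc t0)" using xn yt t0 by auto
      also have "\<dots> \<subseteq> noisy_inf n istar Y H (Suc k * L)" using t0 t1 by (intro noisy_mono) simp
      finally show ?thesis .
    qed
  qed
qed



lemma sets_PiM_count_all:
  assumes "finite J"
  shows "sets (PiM J (\<lambda>_. count_space (UNIV::'b::countable set))) = Pow (PiE J (\<lambda>_. UNIV))"
proof
  show "sets (PiM J (\<lambda>_. count_space (UNIV::'b::countable set))) \<subseteq> Pow (PiE J (\<lambda>_. UNIV))"
    using sets.sets_into_space[of _ "PiM J (\<lambda>_. count_space (UNIV::'b::countable set))"]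
    by (auto simp: space_PiM)
next
  show "Pow (PiE J (\<lambda>_. UNIV)) \<subseteq> sets (PiM J (\<lambda>_. count_space (UNIV::'b::countable set)))"
  proof
    fix A assume A: "A \<in> Pow (PiE J (\<lambda>_. UNIV::'b set))"
    have c: "countable A" using A countable_PiE[OF assms, of "\<lambda>_. UNIV::'b set"]
      by (auto intro: countable_subset)
    have eq: "A = (\<Union>f\<in>A. PiE J (\<lambda>x. {f x}))"
    proof -
      have "\<And>f. f \<in> A \<Longrightarrow> PiE J (\<lambda>x. {f x}) = {f}"
      proof -
        fix f assume "f \<in> A"
        then have "f \<in> PiE J (\<lambda>_. UNIV)" using A by auto
        then show "PiE J (\<lambda>x. {f x}) = {f}" by (auto simp: PiE_iff extensional_def fun_eq_iff) (metis)
      qed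
      then show ?thesis by auto
    qed
    have "(\<Union>f\<in>A. PiE J (\<lambda>x. {f x})) \<in> sets (PiM J (\<lambda>_. count_space (UNIV::'b::countable set)))"
      using c assms by (intro sets.countable_UN'') (auto intro!: sets_PiM_I_finite)
    with eq show "A \<in> sets (PiM J (\<lambda>_. count_space (UNIV::'b::countable set)))" by simp
  qed
qed

lemma measurable_PiM_count_all:
  assumes "finite J"
  shows "f \<in> measurable (PiM J (\<lambda>_. count_space (UNIV::'b::countable set))) (count_space UNIV)"
  by (subst measurable_cong_sets[where M'="count_space (PiE J (\<lambda>_. UNIV))" and N'="count_space UNIV"])
     (simp_all add: sets_PiM_count_all[OF assms])

lemma (in prob_space) indep_vars_prob_prod:
  assumes ind: "indep_vars (\<lambda>_. count_space UNIV) X I" and J: "J \<subseteq> I" "J \<noteq> {}" "finite J"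
  shows "prob {\<omega>\<in>space M. \<forall>x\<in>J. X x \<omega> \<in> R x} = (\<Prod>x\<in>J. prob {\<omega>\<in>space M. X x \<omega> \<in> R x})"
proof -
  have isd: "indep_sets (\<lambda>i. {X i -` A \<inter> space M |A. A \<in> sets (count_space UNIV)}) I"
    using ind unfolding indep_vars_def2 by simp
  have "prob (\<Inter>x\<in>J. X x -` R x \<inter> space M) = (\<Prod>x\<in>J. prob (X x -` R x \<inter> space M))"
    by (rule indep_setsD[OF isd J]) auto
  moreover have "(\<Inter>x\<in>J. X x -` R x \<inter> space M) = {\<omega>\<in>space M. \<forall>x\<in>J. X x \<omega> \<in> R x}"
    using J(2) by auto
  moreover have "\<And>x. X x -` R x \<inter> space M = {\<omega>\<in>space M. X x \<omega> \<in> R x}" by auto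
  ultimately show ?thesis by simp
qed

lemma (in prob_space) restrict_law:
  fixes X :: "'i \<Rightarrow> 'a \<Rightarrow> 'b::countable"
  assumes J: "finite J" "J \<noteq> {}" and ind: "indep_vars (\<lambda>_. count_space UNIV) X J"
  shows "prob {\<omega>\<in>space M. (\<lambda>x\<in>J. X x \<omega>) \<in> S} =
     measure (PiM J (\<lambda>x. distr M (count_space UNIV) (X x))) (S \<inter> PiE J (\<lambda>_. UNIV))"
proof -
  have rv: "\<And>x. x \<in> J \<Longrightarrow> random_variable (count_space UNIV) (X x)"
    using ind unfolding indep_vars_def2 by auto
  have d: "distr M (PiM J (\<lambda>_. count_space UNIV)) (\<lambda>\<omega>. \<lambda>x\<in>J. X x \<omega>) =
           PiM J (\<lambda>x. distr M (count_space UNIV) (X x))"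
    using indep_vars_iff_distr_eq_PiM'[OF J(2) rv] ind by simp
  have m: "(\<lambda>\<omega>. \<lambda>x\<in>J. X x \<omega>) \<in> measurable M (PiM J (\<lambda>_. count_space (UNIV::'b set)))"
    using rv by (intro measurable_restrict) auto
  have s: "S \<inter> PiE J (\<lambda>_. UNIV) \<in> sets (PiM J (\<lambda>_. count_space (UNIV::'b set)))"
    using sets_PiM_count_all[OF J(1)] by auto
  have "measure (PiM J (\<lambda>x. distr M (count_space UNIV) (X x))) (S \<inter> PiE J (\<lambda>_. UNIV))
     = measure M ((\<lambda>\<omega>. \<lambda>x\<in>J. X x \<omega>) -` (S \<inter> PiE J (\<lambda>_. UNIV)) \<inter> space M)"
    unfolding d[symmetric] by (rule measure_distr[OF m s])
  also have "(\<lambda>\<omega>. \<lambda>x\<in>J. X x \<omega>) -` (S \<inter> PiE J (\<lambda>_. UNIV)) \<inter> space M = {\<omega>\<in>space M. (\<lambda>x\<in>J. X x \<omega>) \<in> S}"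
    by auto
  finally show ?thesis by simp
qed



lemma (in prob_space) events_restrict:
  fixes X :: "'i \<Rightarrow> 'a \<Rightarrow> 'b::countable"
  assumes J: "finite J" and rv: "\<forall>x\<in>J. random_variable (count_space UNIV) (X x)"
    and F: "\<forall>\<omega>\<in>space M. F \<omega> = \<Phi> (\<lambda>x\<in>J. X x \<omega>)"
  shows "F \<in> measurable M (count_space UNIV)" "{\<omega>\<in>space M. P (F \<omega>)} \<in> events"
proof -
  have "(\<lambda>\<omega>. \<Phi> (\<lambda>x\<in>J. X x \<omega>)) \<in> measurable M (count_space UNIV)"
    by (rule measurable_comp[OF measurable_restrict measurable_PiM_count_all[OF J], unfolded comp_def])
       (use rv in auto)
  then show m: "F \<in> measurable M (count_space UNIV)"
    using F by (subst measurable_cong) auto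
  have "F -` {x. P x} \<inter> space M \<in> events"
    by (rule measurable_sets[OF m]) simp
  moreover have "F -` {x. P x} \<inter> space M = {\<omega>\<in>space M. P (F \<omega>)}" by auto
  ultimately show "{\<omega>\<in>space M. P (F \<omega>)} \<in> events" by simp
qed

lemma (in prob_space) sel_distr:
  fixes X :: "nat \<times> nat \<Rightarrow> 'a \<Rightarrow> bool \<times> nat" and p :: "bool pmf" and q :: "nat pmf"
  assumes ind: "indep_vars (\<lambda>_. count_space UNIV) X I"
    and B: "finite B" "lst \<in> B" "\<forall>s\<in>B. s \<le> lst" "B \<times> {i} \<subseteq> I"
    and d: "\<forall>t\<in>B. distr M (count_space UNIV) (X (t,i)) = measure_pmf (pair_pmf p q)"
    and Sdef: "\<And>\<omega>. S \<omega> = (if \<exists>t\<in>B. fst (X (t,i) \<omega>) then LEAST t. t \<in> B \<and> fst (X (t,i) \<omega>) else lst)"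
  shows "distr M (count_space UNIV) (\<lambda>\<omega>. snd (X (S \<omega>, i) \<omega>)) = measure_pmf q"
proof -
  let ?J = "B \<times> {i}"
  have rv: "\<forall>x\<in>?J. random_variable (count_space UNIV) (X x)"
    using ind B unfolding indep_vars_def2 by auto
  define \<Phi> where "\<Phi> v = (if \<exists>t\<in>B. fst (v (t,i)) then LEAST t. t \<in> B \<and> fst ((v::nat\<times>nat \<Rightarrow> bool\<times>nat) (t,i)) else lst)" for v
  have SB: "S \<omega> \<in> B" for \<omega>
    using LeastI_ex[of "\<lambda>t. t \<in> B \<and> fst (X (t,i) \<omega>)"] B unfolding Sdef by auto
  have SP: "S \<omega> = \<Phi> (\<lambda>x\<in>?J. X x \<omega>)" for \<omega>
    unfolding Sdef \<Phi>_def by (simp cong: conj_cong)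
  have pX: "prob {\<omega>\<in>space M. X (t,i) \<omega> \<in> R} = measure_pmf.prob (pair_pmf p q) R" if t: "t \<in> B" for t R
  proof -
    have m: "X (t,i) \<in> measurable M (count_space UNIV)" using rv t by auto
    have "measure_pmf.prob (pair_pmf p q) R = measure (distr M (count_space UNIV) (X (t,i))) R"
      using d t by simp
    also have "\<dots> = prob (X (t,i) -` R \<inter> space M)" by (rule measure_distr[OF m]) simp
    finally show ?thesis by (simp add: Int_commute Collect_conj_eq vimage_def Collect_mem_eq)
  qed
  define C where "C t = (\<Prod>x\<in>{s\<in>B. s<t}\<times>{i}. prob {\<omega>\<in>space M. X x \<omega> \<in> {False}\<times>UNIV})" for t
  have pre: "prob {\<omega>\<in>space M. (\<forall>s\<in>B. s<t \<longrightarrow> \<not> fst (X (s,i) \<omega>)) \<and> X (t,i) \<omega> \<in> R}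
             = measure_pmf.prob (pair_pmf p q) R * C t" if t: "t \<in> B" for t R
  proof -
    let ?K = "{s\<in>B. s \<le> t} \<times> {i}"
    define Rf where "Rf x = (if fst x < t then {False}\<times>UNIV else R)" for x :: "nat \<times> nat"
    have "{\<omega>\<in>space M. (\<forall>s\<in>B. s<t \<longrightarrow> \<not> fst (X (s,i) \<omega>)) \<and> X (t,i) \<omega> \<in> R}
          = {\<omega>\<in>space M. \<forall>x\<in>?K. X x \<omega> \<in> Rf x}"
      using t unfolding Rf_def by (auto simp: mem_Times_iff)
    also have "prob \<dots> = (\<Prod>x\<in>?K. prob {\<omega>\<in>space M. X x \<omega> \<in> Rf x})"
      using t B by (intro indep_vars_prob_prod[OF ind]) auto
    also have "\<dots> = prob {\<omega>\<in>space M. X (t,i) \<omega> \<in> Rf (t,i)} * (\<Prod>x\<in>?K - {(t,i)}. prob {\<omega>\<in>space M. X x \<omega> \<in> Rf x})"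
      using t B by (intro prod.remove) auto
    also have "?K - {(t,i)} = {s\<in>B. s<t}\<times>{i}" by auto
    also have "(\<Prod>x\<in>{s\<in>B. s<t}\<times>{i}. prob {\<omega>\<in>space M. X x \<omega> \<in> Rf x}) = C t"
      unfolding C_def Rf_def by (intro prod.cong) auto
    finally show ?thesis using pX[OF t] by (simp add: Rf_def)
  qed
  have pp: "measure_pmf.prob (pair_pmf p q) (A \<times> A') = measure_pmf.prob p A * measure_pmf.prob q A'" for A A'
    by (rule measure_pmf_prob_product) auto
  have key: "prob {\<omega>\<in>space M. S \<omega> = t \<and> snd (X (t,i) \<omega>) = h} = prob {\<omega>\<in>space M. S \<omega> = t} * pmf q h"
    if t: "t \<in> B" for t h
  proof (cases "t < lst")
    case True
    have eq: "S \<omega> = t \<longleftrightarrow> (\<forall>s\<in>B. s<t \<longrightarrow> \<not> fst (X (s,i) \<omega>)) \<and> fst (X (t,i) \<omega>)" for \<omega>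
    proof
      assume St: "S \<omega> = t"
      show "(\<forall>s\<in>B. s<t \<longrightarrow> \<not> fst (X (s,i) \<omega>)) \<and> fst (X (t,i) \<omega>)"
      proof (cases "\<exists>t\<in>B. fst (X (t,i) \<omega>)")
        case True
        then have "S \<omega> = (LEAST t. t \<in> B \<and> fst (X (t,i) \<omega>))" unfolding Sdef by simp
        then have Lt: "(LEAST t. t \<in> B \<and> fst (X (t,i) \<omega>)) = t" using St by simp
        have "t \<in> B \<and> fst (X (t,i) \<omega>)"
          unfolding Lt[symmetric] by (rule LeastI_ex) (use True in blast)
        moreover have "\<not> (s \<in> B \<and> fst (X (s,i) \<omega>))" if "s < t" for s
          using not_less_Least[of s "\<lambda>t. t \<in> B \<and> fst (X (t,i) \<omega>)"] that Lt by simp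
        ultimately show ?thesis by blast
      next
        case False
        then show ?thesis using St \<open>t < lst\<close> unfolding Sdef by simp
      qed
    next
      assume a: "(\<forall>s\<in>B. s<t \<longrightarrow> \<not> fst (X (s,i) \<omega>)) \<and> fst (X (t,i) \<omega>)"
      then have "(LEAST t. t \<in> B \<and> fst (X (t,i) \<omega>)) = t"
        using t by (intro Least_equality) (auto simp: not_less[symmetric])
      then show "S \<omega> = t" using a t unfolding Sdef by auto
    qed
    have "prob {\<omega>\<in>space M. S \<omega> = t \<and> snd (X (t,i) \<omega>) = h}
       = prob {\<omega>\<in>space M. (\<forall>s\<in>B. s<t \<longrightarrow> \<not> fst (X (s,i) \<omega>)) \<and> X (t,i) \<omega> \<in> {True}\<times>{h}}"
      by (intro arg_cong[where f=prob]) (auto simp: eq mem_Times_iff prod_eq_iff)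
    also have "\<dots> = measure_pmf.prob (pair_pmf p q) ({True}\<times>{h}) * C t" by (rule pre[OF t])
    also have "measure_pmf.prob (pair_pmf p q) ({True}\<times>{h}) = pmf p True * pmf q h"
      unfolding pp by (simp add: measure_pmf_single)
    finally have A: "prob {\<omega>\<in>space M. S \<omega> = t \<and> snd (X (t,i) \<omega>) = h} = pmf p True * pmf q h * C t" .
    have "prob {\<omega>\<in>space M. S \<omega> = t}
       = prob {\<omega>\<in>space M. (\<forall>s\<in>B. s<t \<longrightarrow> \<not> fst (X (s,i) \<omega>)) \<and> X (t,i) \<omega> \<in> {True}\<times>UNIV}"
      by (intro arg_cong[where f=prob]) (auto simp: eq mem_Times_iff prod_eq_iff)
    also have "\<dots> = measure_pmf.prob (pair_pmf p q) ({True}\<times>UNIV) * C t" by (rule pre[OF t])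
    also have "measure_pmf.prob (pair_pmf p q) ({True}\<times>UNIV) = pmf p True"
      unfolding pp by (simp add: measure_pmf_single)
    finally show ?thesis using A by simp
  next
    case False
    then have tl: "t = lst" using B t by force
    have eq: "S \<omega> = t \<longleftrightarrow> (\<forall>s\<in>B. s<t \<longrightarrow> \<not> fst (X (s,i) \<omega>))" for \<omega>
    proof
      assume St: "S \<omega> = t"
      show "\<forall>s\<in>B. s<t \<longrightarrow> \<not> fst (X (s,i) \<omega>)"
      proof (cases "\<exists>t\<in>B. fst (X (t,i) \<omega>)")
        case True
        then have "S \<omega> = (LEAST t. t \<in> B \<and> fst (X (t,i) \<omega>))" unfolding Sdef by simp
        then have Lt: "(LEAST t. t \<in> B \<and> fst (X (t,i) \<omega>)) = t" using St by simp
        have "\<not> (s \<in> B \<and> fst (X (s,i) \<omega>))" if "s < t" for s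
          using not_less_Least[of s "\<lambda>t. t \<in> B \<and> fst (X (t,i) \<omega>)"] that Lt by simp
        then show ?thesis by blast
      next
        case False
        then show ?thesis by auto
      qed
    next
      assume a: "\<forall>s\<in>B. s<t \<longrightarrow> \<not> fst (X (s,i) \<omega>)"
      show "S \<omega> = t"
      proof (cases "\<exists>t\<in>B. fst (X (t,i) \<omega>)")
        case True
        have "(LEAST t. t \<in> B \<and> fst (X (t,i) \<omega>)) = t"
        proof (rule Least_equality)
          obtain s where s: "s \<in> B" "fst (X (s,i) \<omega>)" using True by blast
          then have "\<not> s < t" using a by blast
          moreover have "s \<le> t" using s B tl by auto
          ultimately have "s = t" by simp
          then show "t \<in> B \<and> fst (X (t,i) \<omega>)" using s by simp
        next
          fix y assume "y \<in> B \<and> fst (X (y,i) \<omega>)"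
          then show "t \<le> y" using a by (meson not_le)
        qed
        then show ?thesis using True unfolding Sdef by simp
      next
        case False then show ?thesis using tl unfolding Sdef by simp
      qed
    qed
    have "prob {\<omega>\<in>space M. S \<omega> = t \<and> snd (X (t,i) \<omega>) = h}
       = prob {\<omega>\<in>space M. (\<forall>s\<in>B. s<t \<longrightarrow> \<not> fst (X (s,i) \<omega>)) \<and> X (t,i) \<omega> \<in> UNIV\<times>{h}}"
      by (intro arg_cong[where f=prob]) (auto simp: eq mem_Times_iff prod_eq_iff)
    also have "\<dots> = measure_pmf.prob (pair_pmf p q) (UNIV\<times>{h}) * C t" by (rule pre[OF t])
    also have "measure_pmf.prob (pair_pmf p q) (UNIV\<times>{h}) = pmf q h"
      unfolding pp by (simp add: measure_pmf_single)
    finally have A: "prob {\<omega>\<in>space M. S \<omega> = t \<and> snd (X (t,i) \<omega>) = h} = pmf q h * C t" .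
    have "prob {\<omega>\<in>space M. S \<omega> = t}
       = prob {\<omega>\<in>space M. (\<forall>s\<in>B. s<t \<longrightarrow> \<not> fst (X (s,i) \<omega>)) \<and> X (t,i) \<omega> \<in> UNIV\<times>UNIV}"
      by (intro arg_cong[where f=prob]) (auto simp: eq)
    also have "\<dots> = measure_pmf.prob (pair_pmf p q) (UNIV\<times>UNIV) * C t" by (rule pre[OF t])
    also have "measure_pmf.prob (pair_pmf p q) (UNIV\<times>UNIV) = 1"
      unfolding pp by simp
    finally show ?thesis using A by simp
  qed
  have ev1: "{\<omega>\<in>space M. S \<omega> = t \<and> snd (X (t,i) \<omega>) = h} \<in> events" if t: "t \<in> B" for t h
    using events_restrict(2)[OF _ rv, where F="\<lambda>\<omega>. (S \<omega>, snd (X (t,i) \<omega>))" and \<Phi>="\<lambda>v. (\<Phi> v, snd (v (t,i)))" and P="\<lambda>z. z = (t,h)"]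
      B t SP by auto
  have ev2: "{\<omega>\<in>space M. S \<omega> = t} \<in> events" for t
    using events_restrict(2)[OF _ rv, where F=S and \<Phi>=\<Phi> and P="\<lambda>z. z = t"] B SP by auto
  define Z where "Z \<omega> = snd (X (S \<omega>, i) \<omega>)" for \<omega>
  have mZ: "Z \<in> measurable M (count_space UNIV)"
    using events_restrict(1)[OF _ rv, where F=Z and \<Phi>="\<lambda>v. snd (v (\<Phi> v, i))"] B SP SB unfolding Z_def by auto
  have pZ: "prob {\<omega>\<in>space M. Z \<omega> = h} = pmf q h" for h
  proof -
    have "{\<omega>\<in>space M. Z \<omega> = h} = (\<Union>t\<in>B. {\<omega>\<in>space M. S \<omega> = t \<and> snd (X (t,i) \<omega>) = h})"
      using SB unfolding Z_def by auto
    then have "prob {\<omega>\<in>space M. Z \<omega> = h} = (\<Sum>t\<in>B. prob {\<omega>\<in>space M. S \<omega> = t \<and> snd (X (t,i) \<omega>) = h})"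
      using B ev1 by (simp, intro finite_measure_finite_Union) (auto simp: disjoint_family_on_def)
    also have "\<dots> = (\<Sum>t\<in>B. prob {\<omega>\<in>space M. S \<omega> = t}) * pmf q h"
      using key by (simp add: sum_distrib_right)
    also have "(\<Sum>t\<in>B. prob {\<omega>\<in>space M. S \<omega> = t}) = prob (\<Union>t\<in>B. {\<omega>\<in>space M. S \<omega> = t})"
      using B ev2 by (intro finite_measure_finite_Union[symmetric]) (auto simp: disjoint_family_on_def)
    also have "(\<Union>t\<in>B. {\<omega>\<in>space M. S \<omega> = t}) = space M" using SB by auto
    finally show ?thesis by (simp add: prob_space)
  qed
  show ?thesis
    unfolding Z_def[symmetric]
  proof (rule measure_eqI_countable[where A=UNIV])
    fix h :: nat
    have "emeasure (distr M (count_space UNIV) Z) {h} = emeasure M (Z -` {h} \<inter> space M)"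
      by (rule emeasure_distr[OF mZ]) simp
    also have "Z -` {h} \<inter> space M = {\<omega>\<in>space M. Z \<omega> = h}" by auto
    also have "emeasure M \<dots> = ennreal (pmf q h)" using pZ by (simp add: emeasure_eq_measure)
    finally show "emeasure (distr M (count_space UNIV) Z) {h} = emeasure (measure_pmf q) {h}"
      by (simp add: emeasure_pmf_single)
  qed auto
qed



lemma numeric:
  fixes U \<iota> :: real and j :: nat
  assumes U: "0 < U" "U \<le> 1" and j3: "j \<ge> 3" and iota: "\<iota> > 1"
  defines "T \<equiv> nat \<lfloor>\<iota> * real j * ln (real j) / U\<rfloor>"
  defines "L \<equiv> T div j"
  shows "1 \<le> L" "L * j \<le> T" "real T \<le> \<iota> * real j * ln (real j) / U"
    "real j * (1 - U) ^ L \<le> 27 * real j powr (1 - \<iota>)"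
proof -
  define T' where "T' = \<iota> * real j * ln (real j) / U"
  have lnj: "ln (real j) \<ge> 1"
  proof -
    have "exp 1 \<le> real j" using exp_le j3 by linarith
    then show ?thesis using j3 by (subst ln_ge_iff) auto
  qed
  have "1*1 \<le> \<iota> * ln (real j)" by (rule mult_mono) (use lnj iota in auto)
  then have "real j * 1 \<le> real j * (\<iota> * ln (real j))" by (intro mult_left_mono) auto
  then have "real j * 1 * 1 \<le> \<iota> * real j * ln (real j)" by (simp add: ac_simps)
  also have "\<dots> \<le> T'"
  proof -
    have x0: "0 \<le> \<iota> * real j * ln (real j)" using lnj iota by simp
    have "\<iota> * real j * ln (real j) * U \<le> \<iota> * real j * ln (real j)"
      using x0 U by (intro mult_left_le) auto
    then show ?thesis unfolding T'_def using U by (simp add: le_divide_eq)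
  qed
  finally have T'j: "real j \<le> T'" by simp
  have TT: "real T \<le> T'" "T' < real T + 1" unfolding T_def T'_def[symmetric] using T'j by linarith+
  then show "real T \<le> \<iota> * real j * ln (real j) / U" unfolding T'_def by simp
  have "j \<le> T" using TT T'j unfolding T_def T'_def[symmetric] by linarith
  then have "j div j \<le> T div j" by (rule div_le_mono)
  then show "1 \<le> L" unfolding L_def using j3 by simp
  show "L * j \<le> T" unfolding L_def by (simp add: div_times_less_eq_dividend)
  have Tdm: "T = L * j + T mod j" unfolding L_def by simp
  have "T mod j < j" using j3 by simp
  then have "T \<le> L * j + (j - 1)" using Tdm by linarith
  then have "real T \<le> real (L * j + (j - 1))" by (simp only: of_nat_le_iff)
  also have "\<dots> = real L * real j + real j - 1" using j3 by (simp add: of_nat_diff)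
  finally have "real T \<le> real L * real j + real j - 1" .
  then have "T' - real j < real L * real j" using TT by linarith
  then have "T' / real j - 1 < real L" using j3 by (simp add: field_simps)
  then have "U * (T' / real j - 1) \<le> U * real L" using U by (intro mult_left_mono) auto
  moreover have "U * (T' / real j) = \<iota> * ln (real j)" unfolding T'_def using U j3 by (simp add: field_simps)
  ultimately have UL: "\<iota> * ln (real j) - 1 \<le> U * real L" using U by (simp add: algebra_simps)
  have "(1 - U) ^ L \<le> exp (- U) ^ L" using U exp_minus_ge[of U] by (intro power_mono) auto
  also have "\<dots> = exp (- (U * real L))" by (simp add: exp_of_nat_mult[symmetric] ac_simps)
  also have "\<dots> \<le> exp (1 - \<iota> * ln (real j))" using UL by simp
  also have "\<dots> = exp 1 * real j powr (- \<iota>)" using j3 by (simp add: powr_def exp_diff exp_minus field_simps)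
  finally have "real j * (1 - U) ^ L \<le> real j * (exp 1 * real j powr (- \<iota>))"
    by (intro mult_left_mono) auto
  also have "\<dots> = exp 1 * real j powr (1 - \<iota>)" using j3 by (simp add: powr_diff powr_minus field_simps)
  also have "\<dots> \<le> 27 * real j powr (1 - \<iota>)" using exp_le by (intro mult_right_mono) auto
  finally show "real j * (1 - U) ^ L \<le> 27 * real j powr (1 - \<iota>)" .
qed

lemma graph_facts:
  assumes graph: "simple_graph E (n + m)" and n2: "n \<ge> 2" and conn: "hon_connected E n"
  shows "\<And>i. i \<in> {1..n} \<Longrightarrow> Nhon E n i \<noteq> {} \<and> finite (Nhon E n i)"
    "0 < Upsilon E n m" "Upsilon E n m \<le> 1"
proof -
  have ne: "Nhon E n i \<noteq> {}" if i: "i \<in> {1..n}" for i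
  proof -
    have "\<exists>b. b \<in> {1..n} \<and> b \<noteq> i"
    proof (cases "i = 1")
      case True then show ?thesis using n2 by (intro exI[of _ 2]) auto
    next
      case False then show ?thesis using n2 by (intro exI[of _ 1]) auto
    qed
    then obtain b where b: "b \<in> {1..n}" "b \<noteq> i" by blast
    then have "(i, b) \<in> (E \<inter> ({1..n} \<times> {1..n}))\<^sup>*" using conn i unfolding hon_connected_def by blast
    then obtain y where "(i, y) \<in> E \<inter> ({1..n} \<times> {1..n})"
      using b(2) by (metis converse_rtranclE)
    then show ?thesis unfolding Nhon_def by auto
  qed
  have fin: "finite (Nhon E n i)" for i unfolding Nhon_def by auto
  show "\<And>i. i \<in> {1..n} \<Longrightarrow> Nhon E n i \<noteq> {} \<and> finite (Nhon E n i)" using ne fin by auto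
  have r: "0 < real (card (Nhon E n i)) / real (deg E n m i) \<and> real (card (Nhon E n i)) / real (deg E n m i) \<le> 1"
    if i: "i \<in> {1..n}" for i
  proof -
    have "Nhon E n i \<subseteq> {k \<in> {1..n+m}. (i, k) \<in> E}" unfolding Nhon_def by auto
    then have "card (Nhon E n i) \<le> deg E n m i" unfolding deg_def by (intro card_mono) auto
    moreover have "card (Nhon E n i) > 0" using ne[OF i] fin by (simp add: card_gt_0_iff)
    ultimately show ?thesis by (simp add: divide_le_eq_1)
  qed
  let ?S = "(\<lambda>i. real (card (Nhon E n i)) / real (deg E n m i)) ` {1..n}"
  have "finite ?S" "?S \<noteq> {}" using n2 by auto
  then have "Upsilon E n m \<in> ?S" unfolding Upsilon_def by (rule Min_in)
  then show "0 < Upsilon E n m" "Upsilon E n m \<le> 1" using r by auto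
qed



lemma sel_in: "1 \<le> L \<Longrightarrow> 1 \<le> k \<Longrightarrow> sel L k y \<in> blk L k"
proof -
  assume a: "1 \<le> L" "1 \<le> k"
  have "k * L \<in> blk L k" unfolding blk_def using a
    by (cases k) auto
  then show ?thesis using sel_good[of L k y] unfolding sel_def by auto
qed

lemma sel_cong: "(\<And>t. t \<in> blk L k \<Longrightarrow> y t = y' t) \<Longrightarrow> sel L k y = sel L k y'"
  unfolding sel_def by (simp cong: conj_cong)

lemma blk_facts:
  assumes "1 \<le> L" "1 \<le> k"
  shows "blk L k \<subseteq> {1..}" "finite (blk L k)" "card (blk L k) = L" "k * L \<in> blk L k"
    "\<forall>s\<in>blk L k. s \<le> k * L"
  using assms by (auto simp: blk_def) (cases k; auto)+

lemma blk_disj: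
  assumes "k \<noteq> k'" shows "blk L k \<inter> blk L k' = {}"
proof (rule ccontr)
  assume "blk L k \<inter> blk L k' \<noteq> {}"
  then obtain t where t: "t \<in> blk L k" "t \<in> blk L k'" by blast
  have "k < k' \<or> k' < k" using assms by linarith
  then show False
  proof
    assume "k < k'"
    then have "k \<le> k' - 1" by simp
    then have "k * L \<le> (k' - 1) * L" by (rule mult_le_mono1)
    moreover have "t \<le> k*L" "(k'-1)*L + 1 \<le> t" using t unfolding blk_def by auto
    ultimately show False by linarith
  next
    assume "k' < k"
    then have "k' \<le> k - 1" by simp
    then have "k' * L \<le> (k - 1) * L" by (rule mult_le_mono1)
    moreover have "t \<le> k'*L" "(k-1)*L + 1 \<le> t" using t unfolding blk_def by auto
    ultimately show False by linarith
  qed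
qed

lemma (in prob_space) prob_rv:
  "random_variable (count_space UNIV) Z \<Longrightarrow>
   prob {\<omega>\<in>space M. Z \<omega> \<in> R} = measure (distr M (count_space UNIV) Z) R"
  by (subst measure_distr) (auto intro!: arg_cong[where f=prob])



theorem mainTheorem13:
  fixes E :: "(nat \<times> nat) set" and n m istar j :: nat and \<iota> :: real
    and M1 :: "'a measure" and Y :: "nat \<Rightarrow> nat \<Rightarrow> 'a \<Rightarrow> bool" and H :: "nat \<Rightarrow> nat \<Rightarrow> 'a \<Rightarrow> nat"
    and M2 :: "'b measure" and H' :: "nat \<Rightarrow> nat \<Rightarrow> 'b \<Rightarrow> nat"
  assumes graph: "simple_graph E (n + m)"
    and n2: "n \<ge> 2"
    and conn: "hon_connected E n"
    and istar: "istar \<in> {1..n}"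
    and P1: "prob_space M1"
    and indep1: "prob_space.indep_vars M1 (\<lambda>_. count_space UNIV)
                   (\<lambda>(j, i) \<omega>. (Y j i \<omega>, H j i \<omega>)) ({1..} \<times> {1..n})"
    and distr1: "\<And>j i. j \<ge> 1 \<Longrightarrow> i \<in> {1..n} \<Longrightarrow>
                   distr M1 (count_space UNIV) (\<lambda>\<omega>. (Y j i \<omega>, H j i \<omega>)) =
                   measure_pmf (pair_pmf (bernoulli_pmf (Upsilon E n m)) (pmf_of_set (Nhon E n i)))"
    and P2: "prob_space M2"
    and indep2: "prob_space.indep_vars M2 (\<lambda>_. count_space UNIV)
                   (\<lambda>(j, i) \<omega>. H' j i \<omega>) ({1..} \<times> {1..n})"
    and distr2: "\<And>j i. j \<ge> 1 \<Longrightarrow> i \<in> {1..n} \<Longrightarrow>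
                   distr M2 (count_space UNIV) (H' j i) = measure_pmf (pmf_of_set (Nhon E n i))"
    and j3: "j \<ge> 3"
    and iota: "\<iota> > 1"
  shows "measure M1 {\<omega> \<in> space M1.
            ereal_of_enat (spread_time n (noisy_inf n istar (\<lambda>j i. Y j i \<omega>) (\<lambda>j i. H j i \<omega>)))
              > ereal (\<iota> * real j * ln (real j) / Upsilon E n m)}
         \<le> measure M2 {\<omega> \<in> space M2.
              spread_time n (noiseless_inf n istar (\<lambda>j i. H' j i \<omega>)) > enat j}
           + 27 * real n * real j powr (1 - \<iota>)"
proof -
  interpret P1: prob_space M1 by (rule P1)
  interpret P2: prob_space M2 by (rule P2)
  let ?U = "Upsilon E n m"
  have U0: "0 < ?U" and U1: "?U \<le> 1" using graph_facts[OF graph n2 conn] by auto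
  define T where "T = nat \<lfloor>\<iota> * real j * ln (real j) / ?U\<rfloor>"
  define L where "L = T div j"
  have L1: "1 \<le> L" and LT: "L * j \<le> T" and TT: "real T \<le> \<iota> * real j * ln (real j) / ?U"
    and num: "real j * (1 - ?U) ^ L \<le> 27 * real j powr (1 - \<iota>)"
    using numeric[OF U0 U1 j3 iota] unfolding T_def[symmetric] L_def[symmetric] by auto
  define Xp :: "nat \<times> nat \<Rightarrow> 'a \<Rightarrow> bool \<times> nat" where "Xp = (\<lambda>(j, i) \<omega>. (Y j i \<omega>, H j i \<omega>))"
  define I1 :: "(nat \<times> nat) set" where "I1 = {1..} \<times> {1..n}"
  define J :: "(nat \<times> nat) set" where "J = {1..j} \<times> {1..n}"
  define HH :: "nat \<times> nat \<Rightarrow> 'a \<Rightarrow> nat" where "HH = (\<lambda>(k, i) \<omega>. H (sel L k (\<lambda>t. Y t i \<omega>)) i \<omega>)"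
  define H2 :: "nat \<times> nat \<Rightarrow> 'b \<Rightarrow> nat" where "H2 = (\<lambda>(k, i) \<omega>. H' k i \<omega>)"
  define K :: "nat \<times> nat \<Rightarrow> (nat \<times> nat) set" where "K x = blk L (fst x) \<times> {snd x}" for x
  have ind1: "P1.indep_vars (\<lambda>_. count_space UNIV) Xp I1"
    using indep1 unfolding Xp_def I1_def .
  have rvX: "\<forall>x\<in>I1. P1.random_variable (count_space UNIV) (Xp x)"
    using ind1 unfolding P1.indep_vars_def2 by auto
  have Xp_app: "Xp (t, i) \<omega> = (Y t i \<omega>, H t i \<omega>)" for t i \<omega> unfolding Xp_def by simp
  have KI: "K x \<subseteq> I1" if "x \<in> J" for x
    using that blk_facts(1)[OF L1, of "fst x"] unfolding K_def J_def I1_def by auto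
  have Kfin: "finite (K x)" if "x \<in> J" for x
    using that blk_facts(2)[OF L1, of "fst x"] unfolding K_def J_def by auto
  have Jfin: "finite J" and Jne: "J \<noteq> {}" unfolding J_def using j3 n2 by auto
  have JI: "J \<subseteq> I1" unfolding J_def I1_def by auto

  have dHH: "distr M1 (count_space UNIV) (HH x) = measure_pmf (pmf_of_set (Nhon E n (snd x)))"
    if x: "x \<in> J" for x
  proof -
    obtain k i where xk: "x = (k, i)" by (cases x)
    have k: "1 \<le> k" "k \<le> j" and i: "i \<in> {1..n}" using x xk unfolding J_def by auto
    note bf = blk_facts[OF L1 k(1)]
    have d: "\<forall>t\<in>blk L k. distr M1 (count_space UNIV) (Xp (t, i)) =
        measure_pmf (pair_pmf (bernoulli_pmf ?U) (pmf_of_set (Nhon E n i)))"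
    proof
      fix t assume "t \<in> blk L k"
      then have "1 \<le> t" using bf(1) by auto
      then show "distr M1 (count_space UNIV) (Xp (t, i)) =
        measure_pmf (pair_pmf (bernoulli_pmf ?U) (pmf_of_set (Nhon E n i)))"
        using distr1[OF _ i] unfolding Xp_def by simp
    qed
    have "distr M1 (count_space UNIV) (\<lambda>\<omega>. snd (Xp (sel L k (\<lambda>t. Y t i \<omega>), i) \<omega>)) =
          measure_pmf (pmf_of_set (Nhon E n i))"
      by (rule P1.sel_distr[OF ind1 bf(2) bf(4) bf(5) _ d])
         (use bf(1) i in \<open>auto simp: I1_def sel_def Xp_app\<close>)
    moreover have "(\<lambda>\<omega>. snd (Xp (sel L k (\<lambda>t. Y t i \<omega>), i) \<omega>)) = HH x"
      unfolding xk HH_def by (simp add: Xp_app)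
    ultimately show ?thesis using xk by simp
  qed

  have indHH: "P1.indep_vars (\<lambda>_. count_space UNIV) HH J"
  proof -
    have dK: "disjoint_family_on K J"
      unfolding disjoint_family_on_def K_def
    proof (intro ballI impI)
      fix x y assume "x \<in> J" "y \<in> J" "x \<noteq> y"
      show "(blk L (fst x) \<times> {snd x}) \<inter> (blk L (fst y) \<times> {snd y}) = {}"
      proof (cases "snd x = snd y")
        case True
        then have "fst x \<noteq> fst y" using \<open>x \<noteq> y\<close> by (simp add: prod_eq_iff)
        then show ?thesis using blk_disj[of "fst x" "fst y" L] by auto
      next
        case False then show ?thesis by auto
      qed
    qed
    have r: "P1.indep_vars (\<lambda>x. PiM (K x) (\<lambda>_. count_space UNIV)) (\<lambda>x \<omega>. restrict (\<lambda>y. Xp y \<omega>) (K x)) J"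
      by (rule P1.indep_vars_restrict[OF ind1 KI dK])
    define \<phi> :: "nat \<times> nat \<Rightarrow> (nat \<times> nat \<Rightarrow> bool \<times> nat) \<Rightarrow> nat"
      where "\<phi> x v = snd (v (sel L (fst x) (\<lambda>t. fst (v (t, snd x))), snd x))" for x v
    have c: "P1.indep_vars (\<lambda>_. count_space UNIV) (\<lambda>x \<omega>. \<phi> x (restrict (\<lambda>y. Xp y \<omega>) (K x))) J"
      by (rule P1.indep_vars_compose2[OF r]) (rule measurable_PiM_count_all[OF Kfin])
    have eq: "(\<lambda>\<omega>. \<phi> x (restrict (\<lambda>y. Xp y \<omega>) (K x))) = HH x" if x: "x \<in> J" for x
    proof
      fix \<omega>
      obtain k i where xk: "x = (k, i)" by (cases x)
      have k: "1 \<le> k" using x xk unfolding J_def by auto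
      have s: "sel L k (\<lambda>t. fst (restrict (\<lambda>y. Xp y \<omega>) (K x) (t, i))) = sel L k (\<lambda>t. Y t i \<omega>)"
        by (rule sel_cong) (simp add: K_def xk Xp_app)
      have "sel L k (\<lambda>t. Y t i \<omega>) \<in> blk L k" by (rule sel_in[OF L1 k])
      then show "\<phi> x (restrict (\<lambda>y. Xp y \<omega>) (K x)) = HH x \<omega>"
        unfolding \<phi>_def using s by (simp add: xk K_def HH_def Xp_app)
    qed
    show ?thesis using c by (subst (asm) P1.indep_vars_cong[OF refl eq refl]) auto
  qed
  have rvHH: "\<forall>x\<in>J. P1.random_variable (count_space UNIV) (HH x)"
    using indHH unfolding P1.indep_vars_def2 by auto

  have indH2: "P2.indep_vars (\<lambda>_. count_space UNIV) H2 J"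
    using P2.indep_vars_subset[OF indep2[folded H2_def] JI[unfolded I1_def]] .
  let ?S = "{f :: nat \<times> nat \<Rightarrow> nat. noiseless_inf n istar (\<lambda>k i. f (k, i)) j \<noteq> {1..n}}"
  define E1 where "E1 = {\<omega>\<in>space M1. noiseless_inf n istar (\<lambda>k i. HH (k, i) \<omega>) j \<noteq> {1..n}}"
  define E2 where "E2 = {\<omega>\<in>space M2. noiseless_inf n istar (\<lambda>k i. H' k i \<omega>) j \<noteq> {1..n}}"
  have nc1: "noiseless_inf n istar (\<lambda>k i. (\<lambda>x\<in>J. HH x \<omega>) (k, i)) j = noiseless_inf n istar (\<lambda>k i. HH (k, i) \<omega>) j" for \<omega>
    by (rule noiseless_cong) (auto simp: J_def)
  have nc2: "noiseless_inf n istar (\<lambda>k i. (\<lambda>x\<in>J. H2 x \<omega>) (k, i)) j = noiseless_inf n istar (\<lambda>k i. H' k i \<omega>) j" for \<omega>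
    by (rule noiseless_cong) (auto simp: J_def H2_def)
  have "P1.prob E1 = P1.prob {\<omega>\<in>space M1. (\<lambda>x\<in>J. HH x \<omega>) \<in> ?S}"
    unfolding E1_def using nc1 by simp
  also have "\<dots> = measure (PiM J (\<lambda>x. distr M1 (count_space UNIV) (HH x))) (?S \<inter> PiE J (\<lambda>_. UNIV))"
    by (rule P1.restrict_law[OF Jfin Jne indHH])
  also have "PiM J (\<lambda>x. distr M1 (count_space UNIV) (HH x)) = PiM J (\<lambda>x. distr M2 (count_space UNIV) (H2 x))"
  proof (rule PiM_cong[OF refl])
    fix x assume x: "x \<in> J"
    obtain k i where xk: "x = (k, i)" by (cases x)
    have "1 \<le> k" "i \<in> {1..n}" using x xk unfolding J_def by auto
    then show "distr M1 (count_space UNIV) (HH x) = distr M2 (count_space UNIV) (H2 x)"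
      using dHH[OF x] distr2 xk by (simp add: H2_def)
  qed
  also have "measure \<dots> (?S \<inter> PiE J (\<lambda>_. UNIV)) = P2.prob {\<omega>\<in>space M2. (\<lambda>x\<in>J. H2 x \<omega>) \<in> ?S}"
    by (rule P2.restrict_law[OF Jfin Jne indH2, symmetric])
  also have "\<dots> = P2.prob E2" unfolding E2_def using nc2 by simp
  finally have E12: "P1.prob E1 = P2.prob E2" .
  have E2eq: "E2 = {\<omega> \<in> space M2. spread_time n (noiseless_inf n istar (\<lambda>j i. H' j i \<omega>)) > enat j}"
    unfolding E2_def using noiseless_time[OF istar] by auto

  have E1ev: "E1 \<in> P1.events"
    unfolding E1_def
    by (rule P1.events_restrict(2)[OF Jfin rvHH, where \<Phi>="\<lambda>f. noiseless_inf n istar (\<lambda>k i. f (k, i)) j"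
          and F="\<lambda>\<omega>. noiseless_inf n istar (\<lambda>k i. HH (k, i) \<omega>) j" and P="\<lambda>s. s \<noteq> {1..n}"])
       (use nc1 in auto)
  define Bd where "Bd x = {\<omega>\<in>space M1. \<forall>t\<in>blk L (fst x). \<not> Y t (snd x) \<omega>}" for x
  have Bdev: "Bd x \<in> P1.events" if x: "x \<in> J" for x
  proof -
    have rvK: "\<forall>y\<in>K x. P1.random_variable (count_space UNIV) (Xp y)" using rvX KI[OF x] by auto
    show ?thesis unfolding Bd_def
      by (rule P1.events_restrict(2)[OF Kfin[OF x] rvK, where \<Phi>="\<lambda>v. \<forall>t\<in>blk L (fst x). \<not> fst (v (t, snd x))"
          and F="\<lambda>\<omega>. \<forall>t\<in>blk L (fst x). \<not> Y t (snd x) \<omega>" and P="\<lambda>b. b"])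
         (auto simp: K_def Xp_app)
  qed
  have Bdp: "P1.prob (Bd x) = (1 - ?U) ^ L" if x: "x \<in> J" for x
  proof -
    obtain k i where xk: "x = (k, i)" by (cases x)
    have k: "1 \<le> k" and i: "i \<in> {1..n}" using x xk unfolding J_def by auto
    note bf = blk_facts[OF L1 k]
    have "Bd x = {\<omega>\<in>space M1. \<forall>y\<in>K x. Xp y \<omega> \<in> {False} \<times> UNIV}"
      unfolding Bd_def K_def xk by (auto simp: Xp_app)
    also have "P1.prob \<dots> = (\<Prod>y\<in>K x. P1.prob {\<omega>\<in>space M1. Xp y \<omega> \<in> {False} \<times> UNIV})"
      by (rule P1.indep_vars_prob_prod[OF ind1 KI[OF x]]) (use bf L1 Kfin[OF x] in \<open>auto simp: K_def xk\<close>)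
    also have "\<dots> = (\<Prod>y\<in>K x. 1 - ?U)"
    proof (rule prod.cong[OF refl])
      fix y assume y: "y \<in> K x"
      then obtain t where yt: "y = (t, i)" "t \<in> blk L k" unfolding K_def xk by auto
      have "1 \<le> t" using yt bf by auto
      have "P1.prob {\<omega>\<in>space M1. Xp y \<omega> \<in> {False} \<times> UNIV} =
            measure (distr M1 (count_space UNIV) (Xp y)) ({False} \<times> UNIV)"
        by (rule P1.prob_rv) (use rvX KI[OF x] y in auto)
      also have "distr M1 (count_space UNIV) (Xp y) =
          measure_pmf (pair_pmf (bernoulli_pmf ?U) (pmf_of_set (Nhon E n i)))"
        using distr1[OF \<open>1 \<le> t\<close> i] yt unfolding Xp_def by simp
      also have "measure_pmf.prob (pair_pmf (bernoulli_pmf ?U) (pmf_of_set (Nhon E n i))) ({False} \<times> UNIV)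
          = measure_pmf.prob (bernoulli_pmf ?U) {False} * measure_pmf.prob (pmf_of_set (Nhon E n i)) UNIV"
        by (rule measure_pmf_prob_product) auto
      also have "\<dots> = 1 - ?U" using U0 U1 by (simp add: measure_pmf_single)
      finally show "P1.prob {\<omega>\<in>space M1. Xp y \<omega> \<in> {False} \<times> UNIV} = 1 - ?U" .
    qed
    also have "\<dots> = (1 - ?U) ^ L" using bf by (simp add: K_def xk card_cartesian_product)
    finally show ?thesis .
  qed

  let ?A = "{\<omega> \<in> space M1.
            ereal_of_enat (spread_time n (noisy_inf n istar (\<lambda>j i. Y j i \<omega>) (\<lambda>j i. H j i \<omega>)))
              > ereal (\<iota> * real j * ln (real j) / Upsilon E n m)}"
  have incl: "?A \<subseteq> E1 \<union> (\<Union>x\<in>J. Bd x)"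
  proof
    fix \<omega> assume A: "\<omega> \<in> ?A"
    show "\<omega> \<in> E1 \<union> (\<Union>x\<in>J. Bd x)"
    proof (rule ccontr)
      assume nb: "\<omega> \<notin> E1 \<union> (\<Union>x\<in>J. Bd x)"
      have sp: "\<omega> \<in> space M1" using A by simp
      have good: "\<exists>t\<in>blk L k. Y t i \<omega>" if "k \<in> {1..j}" "i \<in> {1..n}" for k i
        using nb sp that unfolding Bd_def J_def by fastforce
      have full: "noiseless_inf n istar (\<lambda>k i. HH (k, i) \<omega>) j = {1..n}"
        using nb sp unfolding E1_def by auto
      have "noiseless_inf n istar (\<lambda>k i. H (sel L k (\<lambda>t. Y t i \<omega>)) i \<omega>) j
            \<subseteq> noisy_inf n istar (\<lambda>j i. Y j i \<omega>) (\<lambda>j i. H j i \<omega>) (j * L)"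
        by (rule coupling[OF istar good]) auto
      also have "\<dots> \<subseteq> noisy_inf n istar (\<lambda>j i. Y j i \<omega>) (\<lambda>j i. H j i \<omega>) T"
        using LT by (intro noisy_mono) (simp add: mult.commute)
      finally have "{1..n} \<subseteq> noisy_inf n istar (\<lambda>j i. Y j i \<omega>) (\<lambda>j i. H j i \<omega>) T"
        using full unfolding HH_def by simp
      then have fT: "noisy_inf n istar (\<lambda>j i. Y j i \<omega>) (\<lambda>j i. H j i \<omega>) T = {1..n}"
        using noisy_sub[OF istar] by blast
      let ?I = "noisy_inf n istar (\<lambda>j i. Y j i \<omega>) (\<lambda>j i. H j i \<omega>)"
      have ex: "\<exists>k. ?I k = {1..n}" using fT by blast
      have st: "spread_time n ?I = enat (LEAST k. ?I k = {1..n})"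
        unfolding spread_time_def using ex by (rule if_P)
      have "(LEAST k. ?I k = {1..n}) \<le> T" using fT by (rule Least_le)
      then have "real (LEAST k. ?I k = {1..n}) \<le> \<iota> * real j * ln (real j) / ?U"
        using TT by linarith
      then show False using A st by simp
    qed
  qed
  have Uev: "(\<Union>x\<in>J. Bd x) \<in> P1.events" using Bdev Jfin by auto
  have "measure M1 ?A \<le> P1.prob (E1 \<union> (\<Union>x\<in>J. Bd x))"
    by (rule P1.finite_measure_mono[OF incl]) (use E1ev Uev in auto)
  also have "\<dots> \<le> P1.prob E1 + P1.prob (\<Union>x\<in>J. Bd x)"
    by (rule measure_Un_le[OF E1ev Uev])
  also have "P1.prob (\<Union>x\<in>J. Bd x) \<le> (\<Sum>x\<in>J. P1.prob (Bd x))"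
    by (rule P1.finite_measure_subadditive_finite[OF Jfin]) (use Bdev in auto)
  also have "(\<Sum>x\<in>J. P1.prob (Bd x)) = real (card J) * (1 - ?U) ^ L"
    using Bdp by simp
  also have "card J = n * j" unfolding J_def by (simp add: card_cartesian_product)
  also have "real (n * j) * (1 - ?U) ^ L \<le> 27 * real n * real j powr (1 - \<iota>)"
    using num mult_left_mono[OF num, of "real n"] by (simp add: ac_simps)
  finally show ?thesis using E12 E2eq by simp
qed


end
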